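(* In the setting described in the context, take $\delta_c=0$ and $\delta_s>0$, so that the problem becomes the CRLB minimization problem $\max\{-\delta_s\,\mathrm{tr}(\mathbf F(\mathbf W)^{-1}):\mathbf W=[\mathbf W_c,\mathbf W_s]\in\mathbb C^{N_t\times(K+N_s)},\ \mathrm{tr}(\mathbf W\mathbf W^H)\le P_t\}$. Then every optimal solution $\mathbf W^\diamond=[\mathbf W_c^\diamond,\mathbf W_s^\diamond]$ of this problem satisfies $\mathrm{rank}(\mathbf W_s^\diamond)\le 3M$.
   Context: Positive integers $N_t,N_r,K,M,L$, nonnegative integer $N_s$; $\sigma_s^2>0$; $P_t>0$. $\mathbf W_c\in\mathbb C^{N_t\times K}$, $\mathbf W_s\in\mathbb C^{N_t\times N_s}$, $\mathbf R_x=\mathbf W_c\mathbf W_c^H+\mathbf W_s\mathbf W_s^H$. Sensing model: differentiable $\mathbf a:\mathbb R^2\to\mathbb C^{N_t}$, $\mathbf b:\mathbb R^2\to\mathbb C^{N_r}$; parameters $\theta_m,\phi_m\in\mathbb R,\alpha_m\in\mathbb C$ ($m=1,\dots,M$); $\mathbf A=[\mathbf a(\theta_m,\phi_m)]_m$, $\mathbf B=[\mathbf b(\theta_m,\phi_m)]_m$, $\mathbf U=\mathrm{diag}(\alpha_m)$; $\dot{\mathbf A}_\theta,\dot{\mathbf A}_\phi,\dot{\mathbf B}_\theta,\dot{\mathbf B}_\phi$ have $m$-th columns the partial derivatives of $\mathbf a$ resp. $\mathbf b$ w.r.t. first resp. second argument at $(\theta_m,\phi_m)$. $\mathbf F(\mathbf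 W)=\frac{2L}{\sigma_s^2}\begin{bmatrix}\Re\mathbf F_{11}&\Re\mathbf F_{12}&\Re\mathbf F_{13}&-\Im\mathbf F_{13}\\ \Re\mathbf F_{12}^{\mathsf T}&\Re\mathbf F_{22}&\Re\mathbf F_{23}&-\Im\mathbf F_{23}\\ \Re\mathbf F_{13}^{\mathsf T}&\Re\mathbf F_{23}^{\mathsf T}&\Re\mathbf F_{33}&-\Im\mathbf F_{33}\\ -\Im\mathbf F_{13}^{\mathsf T}&-\Im\mathbf F_{23}^{\mathsf T}&-\Im\mathbf F_{33}^{\mathsf T}&\Re\mathbf F_{33}\end{bmatrix}$ with $\mathbf F_{11}=(\mathbf U\mathbf A^H\mathbf R_x\mathbf A\mathbf U^H)^{\mathsf T}\odot(\dot{\mathbf B}_\theta^H\dot{\mathbf B}_\theta)+(\mathbf U\mathbf A^H\mathbf R_x\dot{\mathbf A}_\theta\mathbf U^H)^{\mathsf T}\odot(\mathbf B^H\dot{\mathbf B}_\theta)+(\mathbf U\dot{\mathbf A}_\theta^H\mathbf R_x\mathbf A\mathbf U^H)^{\mathsf T}\odot(\dot{\mathbf B}_\theta^H\mathbf B)+(\mathbf U\dot{\mathbf A}_\theta^H\mathbf R_x\dot{\mathbf A}_\theta\mathbf U^H)^{\mathsf T}\odot(\mathbf B^H\mathbf B)$; $\mathbf F_{12}=(\mathbf U\mathbf A^H\mathbf R_x\mathbf A\mathbf U^H)^{\mathsf T}\odot(\dot{\mathbf B}_\theta^H\dot{\mathbf B}_\phi)+(\mathbf U\mathbf A^H\mathbf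 R_x\dot{\mathbf A}_\theta\mathbf U^H)^{\mathsf T}\odot(\mathbf B^H\dot{\mathbf B}_\phi)+(\mathbf U\dot{\mathbf A}_\phi^H\mathbf R_x\mathbf A\mathbf U^H)^{\mathsf T}\odot(\dot{\mathbf B}_\theta^H\mathbf B)+(\mathbf U\dot{\mathbf A}_\phi^H\mathbf R_x\dot{\mathbf A}_\theta\mathbf U^H)^{\mathsf T}\odot(\mathbf B^H\mathbf B)$; $\mathbf F_{22}$ = $\mathbf F_{11}$ with $\theta\to\phi$; $\mathbf F_{13}=(\mathbf A^H\mathbf R_x\mathbf A\mathbf U^H)^{\mathsf T}\odot(\dot{\mathbf B}_\theta^H\mathbf B)+(\mathbf A^H\mathbf R_x\dot{\mathbf A}_\theta\mathbf U^H)^{\mathsf T}\odot(\mathbf B^H\mathbf B)$; $\mathbf F_{23}$ = $\mathbf F_{13}$ with $\theta\to\phi$; $\mathbf F_{33}=(\mathbf A^H\mathbf R_x\mathbf A)^{\mathsf T}\odot(\mathbf B^H\mathbf B)$ ($\odot$ Hadamard product); the objective is considered where $\mathbf F(\mathbf W)$ is invertible. *)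

theory Defs
  imports "HOL-Analysis.Analysis" "Jordan_Normal_Form.Matrix" "Jordan_Normal_Form.DL_Rank"
          "Jordan_Normal_Form.Schur_Decomposition"
begin

abbreviation herm :: "complex mat \<Rightarrow> complex mat" where
  "herm A \<equiv> mat_adjoint A"

definition mtrace :: "'a :: comm_monoid_add mat \<Rightarrow> 'a" where
  "mtrace A = (\<Sum>i<dim_row A. A $$ (i, i))"

definition hadamard :: "'a :: times mat \<Rightarrow> 'a mat \<Rightarrow> 'a mat" (infixl \<open>\<odot>\<close> 70) where
  "A \<odot> B = mat (dim_row A) (dim_col A) (\<lambda>(i, j). A $$ (i, j) * B $$ (i, j))"

text \<open>Inverse of a square matrix (meaningful when the matrix is invertible).\<close>
definition mat_inv :: "'a :: semiring_1 mat \<Rightarrow> 'a mat" where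
  "mat_inv F = (THE B. B \<in> carrier_mat (dim_row F) (dim_row F) \<and>
                       F * B = 1\<^sub>m (dim_row F) \<and> B * F = 1\<^sub>m (dim_row F))"

definition hcat :: "'a mat \<Rightarrow> 'a mat \<Rightarrow> 'a mat" where
  "hcat A B = mat (dim_row A) (dim_col A + dim_col B)
      (\<lambda>(i, j). if j < dim_col A then A $$ (i, j) else B $$ (i, j - dim_col A))"

definition block4 :: "nat \<Rightarrow> (nat \<Rightarrow> nat \<Rightarrow> real mat) \<Rightarrow> real mat" where
  "block4 M blk = mat (4 * M) (4 * M) (\<lambda>(i, j). blk (i div M) (j div M) $$ (i mod M, j mod M))"

text \<open>Steering matrices: columns m < M are a(theta_m, phi_m), and their partial
  derivatives w.r.t. the first resp. second argument. a is given componentwise: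
  a t p i is the i-th entry of a(t,p).\<close>
definition steer :: "nat \<Rightarrow> nat \<Rightarrow> (real \<Rightarrow> real \<Rightarrow> nat \<Rightarrow> complex)
    \<Rightarrow> (nat \<Rightarrow> real) \<Rightarrow> (nat \<Rightarrow> real) \<Rightarrow> complex mat" where
  "steer N M a th ph = mat N M (\<lambda>(i, m). a (th m) (ph m) i)"

definition steer_dth :: "nat \<Rightarrow> nat \<Rightarrow> (real \<Rightarrow> real \<Rightarrow> nat \<Rightarrow> complex)
    \<Rightarrow> (nat \<Rightarrow> real) \<Rightarrow> (nat \<Rightarrow> real) \<Rightarrow> complex mat" where
  "steer_dth N M a th ph =
     mat N M (\<lambda>(i, m). vector_derivative (\<lambda>t. a t (ph m) i) (at (th m)))"

definition steer_dph :: "nat \<Rightarrow> nat \<Rightarrow> (real \<Rightarrow> real \<Rightarrow> nat \<Rightarrow> complex)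
    \<Rightarrow> (nat \<Rightarrow> real) \<Rightarrow> (nat \<Rightarrow> real) \<Rightarrow> complex mat" where
  "steer_dph N M a th ph =
     mat N M (\<lambda>(i, m). vector_derivative (\<lambda>p. a (th m) p i) (at (ph m)))"

definition diag_alpha :: "nat \<Rightarrow> (nat \<Rightarrow> complex) \<Rightarrow> complex mat" where
  "diag_alpha M al = mat M M (\<lambda>(i, j). if i = j then al i else 0)"

text \<open>Notation: A, B, U as in the paper; X1/X2 stand for the derivative matrices of A
  (w.r.t. theta resp. phi) and Y1/Y2 for the derivative matrices of B.
  tq U X R Y = (U X^H R Y U^H)^T.\<close>
definition tq :: "complex mat \<Rightarrow> complex mat \<Rightarrow> complex mat \<Rightarrow> complex mat \<Rightarrow> complex mat" where
  "tq U X R Y = transpose_mat (U * herm X * R * Y * herm U)"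

text \<open>F11 (with X1 = X2, Y1 = Y2 = dtheta) and F22 (with phi), and F12 (X1 = dA_theta,
  X2 = dA_phi, Y1 = dB_theta, Y2 = dB_phi), exactly following the paper's formulas:
  F_pq = (U A^H R A U^H)^T o (Y1^H Y2) + (U A^H R X1 U^H)^T o (B^H Y2)
       + (U X2^H R A U^H)^T o (Y1^H B) + (U X2^H R X1 U^H)^T o (B^H B).\<close>
definition Fpq :: "complex mat \<Rightarrow> complex mat \<Rightarrow> complex mat \<Rightarrow> complex mat \<Rightarrow> complex mat
    \<Rightarrow> complex mat \<Rightarrow> complex mat \<Rightarrow> complex mat \<Rightarrow> complex mat" where
  "Fpq U R A X1 X2 B Y1 Y2 =
       tq U A R A \<odot> (herm Y1 * Y2) + tq U A R X1 \<odot> (herm B * Y2)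
     + tq U X2 R A \<odot> (herm Y1 * B) + tq U X2 R X1 \<odot> (herm B * B)"

text \<open>F13 (X = dA_theta, Y = dB_theta) and F23 (phi):
  (A^H R A U^H)^T o (Y^H B) + (A^H R X U^H)^T o (B^H B).\<close>
definition Fp3 :: "complex mat \<Rightarrow> complex mat \<Rightarrow> complex mat \<Rightarrow> complex mat
    \<Rightarrow> complex mat \<Rightarrow> complex mat \<Rightarrow> complex mat" where
  "Fp3 U R A X B Y =
       transpose_mat (herm A * R * A * herm U) \<odot> (herm Y * B)
     + transpose_mat (herm A * R * X * herm U) \<odot> (herm B * B)"

definition F33 :: "complex mat \<Rightarrow> complex mat \<Rightarrow> complex mat \<Rightarrow> complex mat" where
  "F33 R A B = transpose_mat (herm A * R * A) \<odot> (herm B * B)"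

definition re_mat :: "complex mat \<Rightarrow> real mat" where "re_mat X = map_mat Re X"
definition im_mat :: "complex mat \<Rightarrow> real mat" where "im_mat X = map_mat Im X"

definition FIM_blocks :: "complex mat \<Rightarrow> complex mat \<Rightarrow> complex mat \<Rightarrow> complex mat
    \<Rightarrow> complex mat \<Rightarrow> complex mat \<Rightarrow> nat \<Rightarrow> nat \<Rightarrow> real mat" where
  "FIM_blocks G11 G12 G13 G22 G23 G33 p q =
     [[re_mat G11, re_mat G12, re_mat G13, - im_mat G13],
      [transpose_mat (re_mat G12), re_mat G22, re_mat G23, - im_mat G23],
      [transpose_mat (re_mat G13), transpose_mat (re_mat G23), re_mat G33, - im_mat G33],
      [- transpose_mat (im_mat G13), - transpose_mat (im_mat G23),
       - transpose_mat (im_mat G33), re_mat G33]] ! p ! q"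

definition FIM :: "nat \<Rightarrow> nat \<Rightarrow> nat \<Rightarrow> nat \<Rightarrow> real \<Rightarrow>
    (real \<Rightarrow> real \<Rightarrow> nat \<Rightarrow> complex) \<Rightarrow> (real \<Rightarrow> real \<Rightarrow> nat \<Rightarrow> complex) \<Rightarrow>
    (nat \<Rightarrow> real) \<Rightarrow> (nat \<Rightarrow> real) \<Rightarrow> (nat \<Rightarrow> complex) \<Rightarrow>
    complex mat \<Rightarrow> complex mat \<Rightarrow> real mat" where
  "FIM Nt Nr M L sigma2 a b th ph al Wc Ws =
    (let R = Wc * herm Wc + Ws * herm Ws;
         A = steer Nt M a th ph; At = steer_dth Nt M a th ph; Ap = steer_dph Nt M a th ph;
         B = steer Nr M b th ph; Bt = steer_dth Nr M b th ph; Bp = steer_dph Nr M b th ph;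
         U = diag_alpha M al
     in (2 * real L / sigma2) \<cdot>\<^sub>m block4 M
          (FIM_blocks (Fpq U R A At At B Bt Bt) (Fpq U R A At Ap B Bt Bp) (Fp3 U R A At B Bt)
                      (Fpq U R A Ap Ap B Bp Bp) (Fp3 U R A Ap B Bp) (F33 R A B)))"

definition feasible :: "nat \<Rightarrow> nat \<Rightarrow> nat \<Rightarrow> real \<Rightarrow> complex mat \<Rightarrow> complex mat \<Rightarrow> bool" where
  "feasible Nt K Ns Pt Wc Ws \<longleftrightarrow>
     Wc \<in> carrier_mat Nt K \<and> Ws \<in> carrier_mat Nt Ns \<and>
     Re (mtrace (hcat Wc Ws * herm (hcat Wc Ws))) \<le> Pt"

end

theory Submission imports Defs begin


lemma herm_eq: "herm A = mat (dim_col A) (dim_row A) (\<lambda>(i,j). cnj (A $$ (j,i)))"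
  by (rule eq_matI) (auto simp: mat_adjoint_def mat_of_rows_index)

lemma herm_carrier[simp]: "A \<in> carrier_mat n m \<Longrightarrow> herm A \<in> carrier_mat m n"
  by (auto simp: herm_eq)
lemma herm_dims[simp]: "dim_row (herm A) = dim_col A" "dim_col (herm A) = dim_row A"
  by (auto simp: herm_eq)
lemma herm_index[simp]: "i < dim_col A \<Longrightarrow> j < dim_row A \<Longrightarrow> herm A $$ (i,j) = cnj (A $$ (j,i))"
  by (auto simp: herm_eq)
lemma hadamard_index[simp]: "i < dim_row A \<Longrightarrow> j < dim_col A \<Longrightarrow> (hadamard A B) $$ (i,j) = A $$ (i,j) * B $$ (i,j)"
  by (simp add: hadamard_def)
lemma hadamard_dims[simp]: "dim_row (hadamard A B) = dim_row A" "dim_col (hadamard A B) = dim_col A"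
  by (auto simp: hadamard_def)

definition phi :: "complex mat \<Rightarrow> nat \<Rightarrow> complex mat \<Rightarrow> nat \<Rightarrow> complex" where
  "phi W c X m = (\<Sum>b<dim_row W. cnj (W $$ (b,c)) * X $$ (b,m))"

lemma mult_entry: "i < dim_row A \<Longrightarrow> j < dim_col B \<Longrightarrow> dim_col A = dim_row B \<Longrightarrow>
   (A * B) $$ (i,j) = (\<Sum>k<dim_col A. A $$ (i,k) * B $$ (k,j))"
  by (simp add: scalar_prod_def atLeast0LessThan)

lemma quad_entry:
  assumes X: "X \<in> carrier_mat n M" and Y: "Y \<in> carrier_mat n M" and W: "W \<in> carrier_mat n NC"
    and j: "j < M" and i: "i < M"
  shows "(herm X * (W * herm W) * Y) $$ (j,i) = (\<Sum>c<NC. cnj (phi W c X j) * phi W c Y i)"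
proof -
  have hX: "herm X \<in> carrier_mat M n" and hW: "herm W \<in> carrier_mat NC n" using X W by auto
  have "herm X * (W * herm W) = (herm X * W) * herm W"
    using assoc_mult_mat[OF hX W hW] by simp
  hence "herm X * (W * herm W) * Y = (herm X * W) * herm W * Y" by simp
  also have "\<dots> = (herm X * W) * (herm W * Y)"
    by (rule assoc_mult_mat[OF mult_carrier_mat[OF hX W] hW Y])
  finally have eq: "herm X * (W * herm W) * Y = (herm X * W) * (herm W * Y)" .
  have 1: "(herm X * W) $$ (j,c) = cnj (phi W c X j)" if c: "c < NC" for c
    using X W c j by (subst mult_entry) (auto simp: phi_def mult.commute)
  have 2: "(herm W * Y) $$ (c,i) = phi W c Y i" if c: "c < NC" for c
    using Y W c i by (subst mult_entry) (auto simp: phi_def)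
  show ?thesis unfolding eq using X W Y i j
    by (subst mult_entry) (auto simp del: index_mult_mat(1) simp: 1 2)
qed


definition Qf :: "complex mat \<Rightarrow> complex mat \<Rightarrow> complex mat \<Rightarrow> nat \<Rightarrow> nat \<Rightarrow> complex" where
  "Qf W X Y j i = (\<Sum>c<dim_col W. cnj (phi W c X j) * phi W c Y i)"

definition bb :: "complex mat \<Rightarrow> complex mat \<Rightarrow> nat \<Rightarrow> nat \<Rightarrow> complex" where
  "bb Y1 Y2 i j = (\<Sum>r<dim_row Y1. cnj (Y1 $$ (r,i)) * Y2 $$ (r,j))"

lemma diag_carrier[simp]: "diag_alpha M al \<in> carrier_mat M M"
  by (simp add: diag_alpha_def)
lemma diag_dims[simp]: "dim_row (diag_alpha M al) = M" "dim_col (diag_alpha M al) = M"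
  by (simp_all add: diag_alpha_def)

lemma bb_entry: "Y1 \<in> carrier_mat n M \<Longrightarrow> Y2 \<in> carrier_mat n M \<Longrightarrow> i < M \<Longrightarrow> j < M \<Longrightarrow>
   (herm Y1 * Y2) $$ (i,j) = bb Y1 Y2 i j"
  by (subst mult_entry) (auto simp: bb_def)

lemma diag_left: assumes H: "H \<in> carrier_mat M N" and j: "j < M" and i: "i < N"
  shows "(diag_alpha M al * H) $$ (j,i) = al j * H $$ (j,i)"
proof -
  have "(diag_alpha M al * H) $$ (j,i) = (\<Sum>t<M. diag_alpha M al $$ (j,t) * H $$ (t,i))"
    using H i j by (subst mult_entry) (auto simp: diag_alpha_def)
  also have "\<dots> = (\<Sum>t<M. (if t = j then al j * H $$ (j,i) else 0))"
    using j by (intro sum.cong) (auto simp: diag_alpha_def)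
  also have "\<dots> = al j * H $$ (j,i)" using j by simp
  finally show ?thesis .
qed

lemma diag_right: assumes H: "H \<in> carrier_mat N M" and j: "j < N" and i: "i < M"
  shows "(H * herm (diag_alpha M al)) $$ (j,i) = H $$ (j,i) * cnj (al i)"
proof -
  have "(H * herm (diag_alpha M al)) $$ (j,i) = (\<Sum>t<M. H $$ (j,t) * herm (diag_alpha M al) $$ (t,i))"
    using H i j by (subst mult_entry) (auto simp: diag_alpha_def)
  also have "\<dots> = (\<Sum>t<M. (if t = i then H $$ (j,i) * cnj (al i) else 0))"
    using i by (intro sum.cong) (auto simp: diag_alpha_def)
  also have "\<dots> = H $$ (j,i) * cnj (al i)" using i by simp
  finally show ?thesis .
qed

lemma tq_entry:
  assumes X: "X \<in> carrier_mat n M" and Y: "Y \<in> carrier_mat n M" and W: "W \<in> carrier_mat n NC"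
    and j: "j < M" and i: "i < M"
  shows "tq (diag_alpha M al) X (W * herm W) Y $$ (i,j) = al j * Qf W X Y j i * cnj (al i)"
proof -
  let ?U = "diag_alpha M al"
  let ?R = "W * herm W"
  have R: "?R \<in> carrier_mat n n" using W by auto
  have hX: "herm X \<in> carrier_mat M n" using X by auto
  have e1: "?U * herm X * ?R = ?U * (herm X * ?R)"
    by (rule assoc_mult_mat[OF diag_carrier hX R])
  have e2: "?U * (herm X * ?R) * Y = ?U * (herm X * ?R * Y)"
    by (rule assoc_mult_mat[OF diag_carrier mult_carrier_mat[OF hX R] Y])
  have H: "herm X * ?R * Y \<in> carrier_mat M M" using hX R Y by auto
  have "tq ?U X ?R Y $$ (i,j) = (?U * (herm X * ?R * Y) * herm ?U) $$ (j,i)"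
    unfolding tq_def e1 e2 using i j H by simp
  also have "\<dots> = (?U * (herm X * ?R * Y)) $$ (j,i) * cnj (al i)"
    using mult_carrier_mat[OF diag_carrier H] i j by (intro diag_right) auto
  also have "\<dots> = al j * (herm X * ?R * Y) $$ (j,i) * cnj (al i)"
    using H i j by (subst diag_left) auto
  also have "\<dots> = al j * Qf W X Y j i * cnj (al i)"
    using quad_entry[OF X Y W j i] W by (simp add: Qf_def)
  finally show ?thesis .
qed

lemma tq3_entry:
  assumes X: "X \<in> carrier_mat n M" and Y: "Y \<in> carrier_mat n M" and W: "W \<in> carrier_mat n NC"
    and j: "j < M" and i: "i < M"
  shows "(herm X * (W * herm W) * Y * herm (diag_alpha M al)) $$ (j,i) = Qf W X Y j i * cnj (al i)"
proof -
  have H: "herm X * (W * herm W) * Y \<in> carrier_mat M M" using X Y W by auto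
  have "(herm X * (W * herm W) * Y * herm (diag_alpha M al)) $$ (j,i)
      = (herm X * (W * herm W) * Y) $$ (j,i) * cnj (al i)"
    using H i j by (intro diag_right) auto
  then show ?thesis using quad_entry[OF X Y W j i] W by (simp add: Qf_def)
qed

lemma t33_entry:
  assumes X: "X \<in> carrier_mat n M" and W: "W \<in> carrier_mat n NC"
    and j: "j < M" and i: "i < M"
  shows "(herm X * (W * herm W) * X) $$ (j,i) = Qf W X X j i"
  using quad_entry[OF X X W j i] W X i j by (simp add: Qf_def)


lemma tq_dims[simp]: "dim_row (tq U X R Y) = dim_row U" "dim_col (tq U X R Y) = dim_row U"
  by (simp_all add: tq_def)

lemma Fpq_entry:
  assumes A: "A \<in> carrier_mat n M" and X1: "X1 \<in> carrier_mat n M" and X2: "X2 \<in> carrier_mat n M"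
    and B: "B \<in> carrier_mat nr M" and Y1: "Y1 \<in> carrier_mat nr M" and Y2: "Y2 \<in> carrier_mat nr M"
    and W: "W \<in> carrier_mat n NC" and i: "i < M" and j: "j < M"
  shows "Fpq (diag_alpha M al) (W * herm W) A X1 X2 B Y1 Y2 $$ (i,j) =
     al j * cnj (al i) * (Qf W A A j i * bb Y1 Y2 i j + Qf W A X1 j i * bb B Y2 i j
       + Qf W X2 A j i * bb Y1 B i j + Qf W X2 X1 j i * bb B B i j)"
  unfolding Fpq_def using assms
  by (simp del: index_mult_mat(1) add: tq_entry bb_entry algebra_simps)

lemma Fp3_entry:
  assumes A: "A \<in> carrier_mat n M" and X: "X \<in> carrier_mat n M"
    and B: "B \<in> carrier_mat nr M" and Y: "Y \<in> carrier_mat nr M"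
    and W: "W \<in> carrier_mat n NC" and i: "i < M" and j: "j < M"
  shows "Fp3 (diag_alpha M al) (W * herm W) A X B Y $$ (i,j) =
     cnj (al i) * (Qf W A A j i * bb Y B i j + Qf W A X j i * bb B B i j)"
  unfolding Fp3_def using assms
  by (simp del: index_mult_mat(1) add: tq3_entry bb_entry algebra_simps)

lemma F33_entry:
  assumes A: "A \<in> carrier_mat n M" and B: "B \<in> carrier_mat nr M"
    and W: "W \<in> carrier_mat n NC" and i: "i < M" and j: "j < M"
  shows "F33 (W * herm W) A B $$ (i,j) = Qf W A A j i * bb B B i j"
  unfolding F33_def using assms
  by (simp del: index_mult_mat(1) add: t33_entry bb_entry)

lemma dsum_helper: "(\<Sum>c<NC. \<Sum>r<Nr. (k::complex) * (a c * b r)) = k * ((\<Sum>c<NC. a c) * (\<Sum>r<Nr. b r))"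
  unfolding sum_product by (unfold sum_distrib_left) (rule refl)

lemma gram4:
  "(\<Sum>c<NC. \<Sum>r<Nr. cnj (g1 * (cnj (p1 c) * u1 r + cnj (s1 c) * v1 r)) * (g2 * (cnj (p2 c) * u2 r + cnj (s2 c) * v2 r)))
   = cnj g1 * g2 * ((\<Sum>c<NC. cnj (p2 c) * p1 c) * (\<Sum>r<Nr. cnj (u1 r) * u2 r)
       + (\<Sum>c<NC. cnj (s2 c) * p1 c) * (\<Sum>r<Nr. cnj (u1 r) * v2 r)
       + (\<Sum>c<NC. cnj (p2 c) * s1 c) * (\<Sum>r<Nr. cnj (v1 r) * u2 r)
       + (\<Sum>c<NC. cnj (s2 c) * s1 c) * (\<Sum>r<Nr. cnj (v1 r) * v2 r))" (is "_ = ?rhs")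
proof -
  have "(\<Sum>c<NC. \<Sum>r<Nr. cnj (g1 * (cnj (p1 c) * u1 r + cnj (s1 c) * v1 r)) * (g2 * (cnj (p2 c) * u2 r + cnj (s2 c) * v2 r)))
     = (\<Sum>c<NC. \<Sum>r<Nr. cnj g1 * g2 * ((cnj (p2 c) * p1 c) * (cnj (u1 r) * u2 r))
        + cnj g1 * g2 * ((cnj (s2 c) * p1 c) * (cnj (u1 r) * v2 r))
        + cnj g1 * g2 * ((cnj (p2 c) * s1 c) * (cnj (v1 r) * u2 r))
        + cnj g1 * g2 * ((cnj (s2 c) * s1 c) * (cnj (v1 r) * v2 r)))"
    by (intro sum.cong refl) (simp add: algebra_simps)
  also have "\<dots> = (\<Sum>c<NC. \<Sum>r<Nr. cnj g1 * g2 * ((cnj (p2 c) * p1 c) * (cnj (u1 r) * u2 r)))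
        + (\<Sum>c<NC. \<Sum>r<Nr. cnj g1 * g2 * ((cnj (s2 c) * p1 c) * (cnj (u1 r) * v2 r)))
        + (\<Sum>c<NC. \<Sum>r<Nr. cnj g1 * g2 * ((cnj (p2 c) * s1 c) * (cnj (v1 r) * u2 r)))
        + (\<Sum>c<NC. \<Sum>r<Nr. cnj g1 * g2 * ((cnj (s2 c) * s1 c) * (cnj (v1 r) * v2 r)))"
    by (simp only: sum.distrib)
  also have "\<dots> = cnj g1 * g2 * ((\<Sum>c<NC. cnj (p2 c) * p1 c) * (\<Sum>r<Nr. cnj (u1 r) * u2 r))
       + cnj g1 * g2 * ((\<Sum>c<NC. cnj (s2 c) * p1 c) * (\<Sum>r<Nr. cnj (u1 r) * v2 r))
       + cnj g1 * g2 * ((\<Sum>c<NC. cnj (p2 c) * s1 c) * (\<Sum>r<Nr. cnj (v1 r) * u2 r))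
       + cnj g1 * g2 * ((\<Sum>c<NC. cnj (s2 c) * s1 c) * (\<Sum>r<Nr. cnj (v1 r) * v2 r))"
    by (simp only: dsum_helper)
  also have "\<dots> = ?rhs" by (simp only: distrib_left)
  finally show ?thesis .
qed


lemma gram42:
  "(\<Sum>c<NC. \<Sum>r<Nr. cnj (g1 * (cnj (p1 c) * u1 r + cnj (s1 c) * v1 r)) * (cnj (p2 c) * u2 r))
   = cnj g1 * ((\<Sum>c<NC. cnj (p2 c) * p1 c) * (\<Sum>r<Nr. cnj (u1 r) * u2 r)
       + (\<Sum>c<NC. cnj (p2 c) * s1 c) * (\<Sum>r<Nr. cnj (v1 r) * u2 r))"
  using gram4[of g1 p1 u1 s1 v1 1 p2 u2 p2 "\<lambda>r. 0" Nr NC] by simp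

lemma gram22:
  "(\<Sum>c<NC. \<Sum>r<Nr. cnj (cnj (p1 c) * u1 r) * (cnj (p2 c) * u2 r))
   = (\<Sum>c<NC. cnj (p2 c) * p1 c) * (\<Sum>r<Nr. cnj (u1 r) * u2 r)"
  using gram4[of 1 p1 u1 p1 "\<lambda>r. 0" 1 p2 u2 p2 "\<lambda>r. 0" Nr NC] by simp

definition cinner :: "nat \<Rightarrow> nat \<Rightarrow> (nat \<Rightarrow> nat \<Rightarrow> complex) \<Rightarrow> (nat \<Rightarrow> nat \<Rightarrow> complex) \<Rightarrow> complex" where
  "cinner NC Nr g h = (\<Sum>c<NC. \<Sum>r<Nr. cnj (g c r) * h c r)"

definition gv :: "(nat \<Rightarrow> complex) \<Rightarrow> complex mat \<Rightarrow> complex mat \<Rightarrow> complex mat \<Rightarrow> complex mat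
   \<Rightarrow> complex mat \<Rightarrow> complex mat \<Rightarrow> complex mat \<Rightarrow> nat \<Rightarrow> nat \<Rightarrow> nat \<Rightarrow> nat \<Rightarrow> complex" where
  "gv al A At Ap B Bt Bp W p i c r =
    (if p = 0 then al i * (cnj (phi W c A i) * Bt $$ (r,i) + cnj (phi W c At i) * B $$ (r,i))
     else if p = 1 then al i * (cnj (phi W c A i) * Bp $$ (r,i) + cnj (phi W c Ap i) * B $$ (r,i))
     else if p = 2 then cnj (phi W c A i) * B $$ (r,i)
     else \<i> * (cnj (phi W c A i) * B $$ (r,i)))"

lemma gv0: "gv al A At Ap B Bt Bp W 0 i = (\<lambda>c r. al i * (cnj (phi W c A i) * Bt $$ (r,i) + cnj (phi W c At i) * B $$ (r,i)))"
  by (simp add: gv_def fun_eq_iff)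
lemma gv1: "gv al A At Ap B Bt Bp W (Suc 0) i = (\<lambda>c r. al i * (cnj (phi W c A i) * Bp $$ (r,i) + cnj (phi W c Ap i) * B $$ (r,i)))"
  by (simp add: gv_def fun_eq_iff)
lemma gv2: "gv al A At Ap B Bt Bp W 2 i = (\<lambda>c r. cnj (phi W c A i) * B $$ (r,i))"
  by (simp add: gv_def fun_eq_iff)
lemma gv3: "gv al A At Ap B Bt Bp W 3 i = (\<lambda>c r. \<i> * gv al A At Ap B Bt Bp W 2 i c r)"
  by (simp add: gv_def fun_eq_iff)

lemma inner_swap: "cinner NC nr g h = cnj (cinner NC nr h g)"
  by (simp add: cinner_def mult.commute)
lemma inner_i_right: "cinner NC nr g (\<lambda>c r. \<i> * h c r) = \<i> * cinner NC nr g h"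
  by (simp add: cinner_def sum_distrib_left algebra_simps)
lemma inner_i_left: "cinner NC nr (\<lambda>c r. \<i> * g c r) h = - \<i> * cinner NC nr g h"
  by (simp add: cinner_def sum_distrib_left algebra_simps)

lemma Fpq_dims[simp]: "dim_row (Fpq U R A X1 X2 B Y1 Y2) = dim_row U" "dim_col (Fpq U R A X1 X2 B Y1 Y2) = dim_row U"
  by (simp_all add: Fpq_def)
lemma Fp3_dims[simp]: "dim_row (Fp3 U R A X B Y) = dim_row U" "dim_col (Fp3 U R A X B Y) = dim_col A"
  by (simp_all add: Fp3_def)
lemma F33_dims[simp]: "dim_row (F33 R A B) = dim_col A" "dim_col (F33 R A B) = dim_col A"
  by (simp_all add: F33_def)

lemma re_mat_index[simp]: "i < dim_row X \<Longrightarrow> j < dim_col X \<Longrightarrow> re_mat X $$ (i,j) = Re (X $$ (i,j))"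
  by (simp add: re_mat_def)
lemma im_mat_index[simp]: "i < dim_row X \<Longrightarrow> j < dim_col X \<Longrightarrow> im_mat X $$ (i,j) = Im (X $$ (i,j))"
  by (simp add: im_mat_def)
lemma re_im_dims[simp]: "dim_row (re_mat X) = dim_row X" "dim_col (re_mat X) = dim_col X"
  "dim_row (im_mat X) = dim_row X" "dim_col (im_mat X) = dim_col X"
  by (simp_all add: re_mat_def im_mat_def)

lemma block4_index: "k < 4 * M \<Longrightarrow> l < 4 * M \<Longrightarrow>
   block4 M blk $$ (k,l) = blk (k div M) (l div M) $$ (k mod M, l mod M)"
  by (simp add: block4_def)
lemma block4_dims[simp]: "dim_row (block4 M blk) = 4 * M" "dim_col (block4 M blk) = 4 * M"
  by (simp_all add: block4_def)

context
  fixes A At Ap B Bt Bp W :: "complex mat" and n nr M NC :: nat and al :: "nat \<Rightarrow> complex"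
  assumes A: "A \<in> carrier_mat n M" and At: "At \<in> carrier_mat n M" and Ap: "Ap \<in> carrier_mat n M"
    and B: "B \<in> carrier_mat nr M" and Bt: "Bt \<in> carrier_mat nr M" and Bp: "Bp \<in> carrier_mat nr M"
    and W: "W \<in> carrier_mat n NC"
begin

abbreviation "GG \<equiv> gv al A At Ap B Bt Bp W"
abbreviation "UU \<equiv> diag_alpha M al"
abbreviation "RR \<equiv> W * herm W"

lemma NCeq: "dim_col W = NC" using W by simp
lemma Nreq: "dim_row B = nr" "dim_row Bt = nr" "dim_row Bp = nr" using B Bt Bp by auto

lemma g00: "i < M \<Longrightarrow> j < M \<Longrightarrow> cinner NC nr (GG 0 i) (GG 0 j) = Fpq UU RR A At At B Bt Bt $$ (i,j)"
  unfolding cinner_def gv0 gram4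
  by (simp add: Fpq_entry[OF A At At B Bt Bt W] Qf_def bb_def NCeq Nreq algebra_simps)

lemma g01: "i < M \<Longrightarrow> j < M \<Longrightarrow> cinner NC nr (GG 0 i) (GG (Suc 0) j) = Fpq UU RR A At Ap B Bt Bp $$ (i,j)"
  unfolding cinner_def gv0 gv1 gram4
  by (simp add: Fpq_entry[OF A At Ap B Bt Bp W] Qf_def bb_def NCeq Nreq algebra_simps)

lemma g11: "i < M \<Longrightarrow> j < M \<Longrightarrow> cinner NC nr (GG (Suc 0) i) (GG (Suc 0) j) = Fpq UU RR A Ap Ap B Bp Bp $$ (i,j)"
  unfolding cinner_def gv1 gram4
  by (simp add: Fpq_entry[OF A Ap Ap B Bp Bp W] Qf_def bb_def NCeq Nreq algebra_simps)

lemma g02: "i < M \<Longrightarrow> j < M \<Longrightarrow> cinner NC nr (GG 0 i) (GG 2 j) = Fp3 UU RR A At B Bt $$ (i,j)"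
  unfolding cinner_def gv0 gv2 gram42
  by (simp add: Fp3_entry[OF A At B Bt W] Qf_def bb_def NCeq Nreq algebra_simps)

lemma g12: "i < M \<Longrightarrow> j < M \<Longrightarrow> cinner NC nr (GG (Suc 0) i) (GG 2 j) = Fp3 UU RR A Ap B Bp $$ (i,j)"
  unfolding cinner_def gv1 gv2 gram42
  by (simp add: Fp3_entry[OF A Ap B Bp W] Qf_def bb_def NCeq Nreq algebra_simps)

lemma g22: "i < M \<Longrightarrow> j < M \<Longrightarrow> cinner NC nr (GG 2 i) (GG 2 j) = F33 RR A B $$ (i,j)"
  unfolding cinner_def gv2 gram22
  by (simp add: F33_entry[OF A B W] Qf_def bb_def NCeq Nreq algebra_simps)

lemma g10: "i < M \<Longrightarrow> j < M \<Longrightarrow> cinner NC nr (GG (Suc 0) i) (GG 0 j) = cnj (Fpq UU RR A At Ap B Bt Bp $$ (j,i))"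
  by (subst inner_swap) (simp add: g01)
lemma g20: "i < M \<Longrightarrow> j < M \<Longrightarrow> cinner NC nr (GG 2 i) (GG 0 j) = cnj (Fp3 UU RR A At B Bt $$ (j,i))"
  by (subst inner_swap) (simp add: g02)
lemma g21: "i < M \<Longrightarrow> j < M \<Longrightarrow> cinner NC nr (GG 2 i) (GG (Suc 0) j) = cnj (Fp3 UU RR A Ap B Bp $$ (j,i))"
  by (subst inner_swap) (simp add: g12)

lemma dimsA: "dim_col A = M" "dim_row A = n" using A by auto

lemma fim_entry:
  assumes k: "k < 4 * M" and l: "l < 4 * M"
  shows "(sc \<cdot>\<^sub>m block4 M (FIM_blocks (Fpq UU RR A At At B Bt Bt) (Fpq UU RR A At Ap B Bt Bp) (Fp3 UU RR A At B Bt)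
                      (Fpq UU RR A Ap Ap B Bp Bp) (Fp3 UU RR A Ap B Bp) (F33 RR A B))) $$ (k,l)
    = sc * Re (cinner NC nr (GG (k div M) (k mod M)) (GG (l div M) (l mod M)))"
proof -
  have M0: "M > 0" using k by auto
  define i where "i = k mod M"
  define j where "j = l mod M"
  define p where "p = k div M"
  define q where "q = l div M"
  have i: "i < M" and j: "j < M" using M0 by (auto simp: i_def j_def)
  have p: "p < 4" using k by (simp add: p_def less_mult_imp_div_less)
  have q: "q < 4" using l by (simp add: q_def less_mult_imp_div_less)
  have p4: "p = 0 \<or> p = 1 \<or> p = 2 \<or> p = 3" using p by auto
  have q4: "q = 0 \<or> q = 1 \<or> q = 2 \<or> q = 3" using q by auto
  have h33: "Im (F33 RR A B $$ (j,i)) = - Im (F33 RR A B $$ (i,j))"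
  proof -
    have "F33 RR A B $$ (j,i) = cnj (F33 RR A B $$ (i,j))"
      using g22[OF j i] g22[OF i j] inner_swap[of NC nr "GG 2 j" "GG 2 i"] by simp
    then show ?thesis by simp
  qed
  have "(sc \<cdot>\<^sub>m block4 M (FIM_blocks (Fpq UU RR A At At B Bt Bt) (Fpq UU RR A At Ap B Bt Bp) (Fp3 UU RR A At B Bt)
                      (Fpq UU RR A Ap Ap B Bp Bp) (Fp3 UU RR A Ap B Bp) (F33 RR A B))) $$ (k,l)
     = sc * (FIM_blocks (Fpq UU RR A At At B Bt Bt) (Fpq UU RR A At Ap B Bt Bp) (Fp3 UU RR A At B Bt)
                      (Fpq UU RR A Ap Ap B Bp Bp) (Fp3 UU RR A Ap B Bp) (F33 RR A B) p q $$ (i,j))"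
    using k l by (simp add: block4_index p_def q_def i_def j_def)
  also have "\<dots> = sc * Re (cinner NC nr (GG p i) (GG q j))"
    using p4 q4 i j h33
    by (auto simp: FIM_blocks_def dimsA g00 g01 g02 g11 g12 g22 g10 g20 g21 gv3 inner_i_left inner_i_right)
  finally show ?thesis by (simp add: p_def q_def i_def j_def)
qed

end



lemma mat_inv_eq:
  assumes F: "F \<in> carrier_mat n n" and B: "B \<in> carrier_mat n n"
    and FB: "F * B = 1\<^sub>m n" and BF: "B * F = 1\<^sub>m n"
  shows "mat_inv F = B"
  unfolding mat_inv_def
proof (rule the_equality)
  show "B \<in> carrier_mat (dim_row F) (dim_row F) \<and> F * B = 1\<^sub>m (dim_row F) \<and> B * F = 1\<^sub>m (dim_row F)"
    using F B FB BF by auto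
next
  fix B' assume h: "B' \<in> carrier_mat (dim_row F) (dim_row F) \<and> F * B' = 1\<^sub>m (dim_row F) \<and> B' * F = 1\<^sub>m (dim_row F)"
  hence B': "B' \<in> carrier_mat n n" and B'F: "B' * F = 1\<^sub>m n" using F by auto
  have "B' = B' * (F * B)" using B' FB by simp
  also have "\<dots> = (B' * F) * B" using B' F B by (simp add: assoc_mult_mat)
  also have "\<dots> = B" using B'F B by simp
  finally show "B' = B" .
qed

lemma invertible_inv:
  assumes F: "F \<in> carrier_mat n n" and inv: "invertible_mat F"
  shows "mat_inv F \<in> carrier_mat n n \<and> F * mat_inv F = 1\<^sub>m n \<and> mat_inv F * F = 1\<^sub>m n"
proof -
  obtain B where FB: "F * B = 1\<^sub>m (dim_row F)" and BF: "B * F = 1\<^sub>m (dim_row B)"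
    using inv unfolding invertible_mat_def inverts_mat_def by blast
  have dB: "dim_col B = n" using FB F by (metis carrier_matD(1) index_mult_mat(3) index_one_mat(3))
  have dB2: "dim_row B = n" using BF F by (metis carrier_matD(2) index_mult_mat(3) index_one_mat(3))
  have B: "B \<in> carrier_mat n n" using dB dB2 by auto
  have "mat_inv F = B" using mat_inv_eq[OF F B] FB BF F dB2 by auto
  thus ?thesis using B FB BF F dB2 by auto
qed

lemma inner_sum_right: "cinner NC Nr g (\<lambda>c r. \<Sum>k<n. y k * f k c r) = (\<Sum>k<n. y k * cinner NC Nr g (f k))"
  unfolding cinner_def by (simp add: sum_distrib_left sum_distrib_right algebra_simps sum.swap[of _ "{..<n}"])

lemma inner_sum_left: "cinner NC Nr (\<lambda>c r. \<Sum>k<n. complex_of_real (y k) * f k c r) h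
   = (\<Sum>k<n. complex_of_real (y k) * cinner NC Nr (f k) h)"
  unfolding cinner_def by (simp add: sum_distrib_left sum_distrib_right algebra_simps sum.swap[of _ "{..<n}"])

lemma inner_self: "cinner NC Nr h h = complex_of_real (\<Sum>c<NC. \<Sum>r<Nr. (cmod (h c r))\<^sup>2)"
  unfolding cinner_def of_real_sum by (intro sum.cong refl) (metis complex_norm_square mult.commute of_real_power)

lemma inner_self_zero:
  fixes NC Nr :: nat
  assumes "(\<Sum>c<NC. \<Sum>r<Nr. (cmod (h c r))\<^sup>2) = 0" and "c < NC" and "r < Nr"
  shows "h c r = 0"
proof -
  have "\<forall>c\<in>{..<NC}. (\<Sum>r<Nr. (cmod (h c r))\<^sup>2) = 0"
    using assms(1) sum_nonneg_eq_0_iff[of "{..<NC}" "\<lambda>c. \<Sum>r<Nr. (cmod (h c r))\<^sup>2"]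
    by (simp add: sum_nonneg)
  hence "(\<Sum>r<Nr. (cmod (h c r))\<^sup>2) = 0" using assms(2) by auto
  hence "\<forall>r\<in>{..<Nr}. (cmod (h c r))\<^sup>2 = 0"
    using sum_nonneg_eq_0_iff[of "{..<Nr}" "\<lambda>r. (cmod (h c r))\<^sup>2"] by simp
  thus ?thesis using assms(3) by auto
qed

lemma gram_trace_pos:
  fixes F :: "real mat"
  assumes F: "F \<in> carrier_mat n n" and n: "n > 0" and sc: "sc > 0"
    and Fe: "\<And>k l. k < n \<Longrightarrow> l < n \<Longrightarrow> F $$ (k,l) = sc * Re (cinner NC Nr (g k) (g l))"
    and inv: "invertible_mat F"
  shows "mtrace (mat_inv F) > 0"
proof -
  define B where "B = mat_inv F"
  have B: "B \<in> carrier_mat n n" and FB: "F * B = 1\<^sub>m n" using invertible_inv[OF F inv] B_def by auto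
  have diagpos: "B $$ (t,t) > 0" if t: "t < n" for t
  proof -
    define y where "y k = B $$ (k,t)" for k
    define h where "h c r = (\<Sum>k<n. complex_of_real (y k) * g k c r)" for c r
    have Fy: "(\<Sum>k<n. F $$ (l,k) * y k) = (if l = t then 1 else 0)" if l: "l < n" for l
    proof -
      have "(F * B) $$ (l,t) = (\<Sum>k<n. F $$ (l,k) * y k)"
        using F B l t by (subst mult_entry) (auto simp: y_def)
      thus ?thesis using FB l t by simp
    qed
    have Fy2: "(\<Sum>k<n. F $$ (l,k) * y k) = sc * Re (cinner NC Nr (g l) h)" if l: "l < n" for l
    proof -
      have "cinner NC Nr (g l) h = (\<Sum>k<n. complex_of_real (y k) * cinner NC Nr (g l) (g k))"
        unfolding h_def by (rule inner_sum_right)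
      hence "Re (cinner NC Nr (g l) h) = (\<Sum>k<n. y k * Re (cinner NC Nr (g l) (g k)))"
        by simp
      thus ?thesis using l Fe by (simp add: sum_distrib_left algebra_simps)
    qed
    have Btt: "B $$ (t,t) = sc * Re (cinner NC Nr h h)"
    proof -
      have "cinner NC Nr h h = (\<Sum>l<n. complex_of_real (y l) * cinner NC Nr (g l) h)"
        unfolding h_def[abs_def] by (rule inner_sum_left)
      hence "sc * Re (cinner NC Nr h h) = (\<Sum>l<n. y l * (sc * Re (cinner NC Nr (g l) h)))"
        by (simp add: sum_distrib_left algebra_simps)
      also have "\<dots> = (\<Sum>l<n. y l * (if l = t then 1 else 0))"
        by (intro sum.cong refl) (simp add: Fy Fy2[symmetric])
      also have "\<dots> = y t" using t by (simp add: if_distrib cong: if_cong)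
      finally show ?thesis by (simp add: y_def)
    qed
    have nn: "Re (cinner NC Nr h h) = (\<Sum>c<NC. \<Sum>r<Nr. (cmod (h c r))\<^sup>2)"
      by (simp add: inner_self)
    show ?thesis
    proof (rule ccontr)
      assume "\<not> B $$ (t,t) > 0"
      hence "(\<Sum>c<NC. \<Sum>r<Nr. (cmod (h c r))\<^sup>2) \<le> 0" using Btt nn sc
        by (simp add: mult_le_0_iff) (smt (verit) mult_pos_pos)
      hence z: "(\<Sum>c<NC. \<Sum>r<Nr. (cmod (h c r))\<^sup>2) = 0"
        by (simp add: order_antisym sum_nonneg)
      have "cinner NC Nr (g t) h = 0"
        unfolding cinner_def using inner_self_zero[OF z] by (intro sum.neutral) auto
      hence "(\<Sum>k<n. F $$ (t,k) * y k) = 0" using Fy2[OF t] by simp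
      thus False using Fy[OF t] by simp
    qed
  qed
  have "mtrace B = (\<Sum>t<n. B $$ (t,t))" using B by (simp add: mtrace_def)
  also have "\<dots> > 0" using n diagpos by (intro sum_pos) auto
  finally show ?thesis by (simp add: B_def)
qed



lemma rank_outer_sum:
  fixes f g :: "nat \<Rightarrow> nat \<Rightarrow> complex"
  shows "W \<in> carrier_mat n nc \<Longrightarrow> (\<And>b c. b < n \<Longrightarrow> c < nc \<Longrightarrow> W $$ (b,c) = (\<Sum>i<d. f i b * g i c))
    \<Longrightarrow> vec_space.rank n W \<le> d"
proof (induction d arbitrary: W)
  case 0
  hence "W = 0\<^sub>m n nc" by (intro eq_matI) auto
  thus ?case using vec_space.rank_0I by (metis le_refl)
next
  case (Suc d)
  define W1 where "W1 = mat n nc (\<lambda>(b,c). \<Sum>i<d. f i b * g i c)"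
  define W2 where "W2 = mat n nc (\<lambda>(b,c). f d b * g d c)"
  have W1: "W1 \<in> carrier_mat n nc" and W2: "W2 \<in> carrier_mat n nc" by (auto simp: W1_def W2_def)
  have "W = W1 + W2" using Suc.prems by (intro eq_matI) (auto simp: W1_def W2_def)
  moreover have "vec_space.rank n W1 \<le> d" using Suc.IH[OF W1] by (auto simp: W1_def)
  moreover have "vec_space.rank n W2 \<le> 1"
    by (rule vec_space.rank_le_1_product_entries[OF W2, of "f d" "g d"]) (auto simp: W2_def)
  moreover have "vec_space.rank n (W1 + W2) \<le> vec_space.rank n W1 + vec_space.rank n W2"
    by (rule vec_space.rank_subadditive[OF W1 W2])
  ultimately show ?case by simp
qed

definition ip :: "nat \<Rightarrow> (nat \<Rightarrow> complex) \<Rightarrow> (nat \<Rightarrow> complex) \<Rightarrow> complex" where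
  "ip n x y = (\<Sum>b<n. cnj (x b) * y b)"

lemma ip_lin_left: "ip n (\<lambda>b. (\<Sum>i<d. s i * X i b) + u b) y = (\<Sum>i<d. cnj (s i) * ip n (X i) y) + ip n u y"
  unfolding ip_def by (simp add: sum.distrib sum_distrib_left sum_distrib_right algebra_simps sum.swap[of _ "{..<d}"])

lemma ip_lin_right_minus: "ip n x (\<lambda>b. v b - k * u b) = ip n x v - k * ip n x u"
  unfolding ip_def by (simp add: sum_subtractf sum_distrib_left algebra_simps)

lemma ip_self_zero: assumes "ip n u u = 0" "b < n" shows "u b = 0"
proof -
  have e: "ip n u u = complex_of_real (\<Sum>b<n. (cmod (u b))\<^sup>2)"
    unfolding ip_def of_real_sum by (intro sum.cong refl) (metis complex_norm_square mult.commute of_real_power)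
  have "(\<Sum>b<n. (cmod (u b))\<^sup>2) = 0" by (metis e assms(1) of_real_eq_0_iff)
  hence "\<forall>b\<in>{..<n}. (cmod (u b))\<^sup>2 = 0"
    using sum_nonneg_eq_0_iff[of "{..<n}" "\<lambda>b. (cmod (u b))\<^sup>2"] by simp
  thus ?thesis using assms(2) by auto
qed

lemma proj_exists:
  fixes X :: "nat \<Rightarrow> nat \<Rightarrow> complex"
  shows "\<exists>t v. (\<forall>b<n. w b = (\<Sum>i<d. t i * X i b) + v b) \<and> (\<forall>i<d. ip n (X i) v = 0)"
proof (induction d arbitrary: w)
  case 0
  show ?case by (rule exI[of _ "\<lambda>_. 0"], rule exI[of _ w]) simp
next
  case (Suc d)
  obtain t v where tv: "\<forall>b<n. w b = (\<Sum>i<d. t i * X i b) + v b" and vo: "\<forall>i<d. ip n (X i) v = 0"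
    using Suc.IH[of w] by blast
  obtain s u where su: "\<forall>b<n. X d b = (\<Sum>i<d. s i * X i b) + u b" and uo: "\<forall>i<d. ip n (X i) u = 0"
    using Suc.IH[of "X d"] by blast
  define k where "k = ip n u v / ip n u u"
  define v' where "v' b = v b - k * u b" for b
  define t' where "t' i = (if i < d then t i - k * s i else k)" for i
  have "\<forall>b<n. w b = (\<Sum>i<Suc d. t' i * X i b) + v' b"
  proof (intro allI impI)
    fix b assume b: "b < n"
    have "(\<Sum>i<Suc d. t' i * X i b) = (\<Sum>i<d. (t i - k * s i) * X i b) + k * X d b"
      by (simp add: t'_def)
    also have "\<dots> = (\<Sum>i<d. t i * X i b) - k * (\<Sum>i<d. s i * X i b) + k * X d b"
      by (simp add: algebra_simps sum_subtractf sum_distrib_left)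
    also have "\<dots> = (\<Sum>i<d. t i * X i b) + k * u b" using su b by (simp add: algebra_simps)
    finally show "w b = (\<Sum>i<Suc d. t' i * X i b) + v' b" using tv b by (simp add: v'_def)
  qed
  moreover have "\<forall>i<Suc d. ip n (X i) v' = 0"
  proof (intro allI impI)
    fix i assume i: "i < Suc d"
    have v'_def2: "v' = (\<lambda>b. v b - k * u b)" by (simp add: v'_def fun_eq_iff)
    show "ip n (X i) v' = 0"
    proof (cases "i < d")
      case True
      thus ?thesis using vo uo by (simp add: v'_def2 ip_lin_right_minus)
    next
      case False
      hence id: "i = d" using i by simp
      have Xd: "ip n (X d) v' = ip n (\<lambda>b. (\<Sum>i<d. s i * X i b) + u b) v'"
        unfolding ip_def using su by (intro sum.cong refl) auto
      have "ip n (X d) v' = (\<Sum>i<d. cnj (s i) * ip n (X i) v') + ip n u v'"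
        unfolding Xd by (rule ip_lin_left)
      also have "(\<Sum>i<d. cnj (s i) * ip n (X i) v') = 0"
        using vo uo by (simp add: v'_def2 ip_lin_right_minus)
      also have "ip n u v' = 0"
      proof (cases "ip n u u = 0")
        case True
        hence "\<forall>b<n. u b = 0" using ip_self_zero by blast
        thus ?thesis by (simp add: ip_def)
      next
        case False
        have "ip n u v' = ip n u v - k * ip n u u" by (simp add: v'_def2 ip_lin_right_minus)
        thus ?thesis using False by (simp add: k_def)
      qed
      finally show ?thesis using id by simp
    qed
  qed
  ultimately show ?case by blast
qed


lemma sum_split_add: fixes K N :: nat and f :: "nat \<Rightarrow> 'a::comm_monoid_add"
  shows "(\<Sum>c<K+N. f c) = (\<Sum>c<K. f c) + (\<Sum>c<N. f (K + c))"
  by (induct N) (auto simp: add.assoc)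

lemma hcat_dims[simp]: "dim_row (hcat Wc Ws) = dim_row Wc" "dim_col (hcat Wc Ws) = dim_col Wc + dim_col Ws"
  by (simp_all add: hcat_def)

lemma hcat_index: "b < dim_row Wc \<Longrightarrow> c < dim_col Wc + dim_col Ws \<Longrightarrow>
   hcat Wc Ws $$ (b,c) = (if c < dim_col Wc then Wc $$ (b,c) else Ws $$ (b, c - dim_col Wc))"
  by (simp add: hcat_def)

lemma hcat_carrier: "Wc \<in> carrier_mat n K \<Longrightarrow> Ws \<in> carrier_mat n N \<Longrightarrow> hcat Wc Ws \<in> carrier_mat n (K+N)"
  by auto

lemma hcat_R:
  assumes Wc: "Wc \<in> carrier_mat n K" and Ws: "Ws \<in> carrier_mat n N"
  shows "hcat Wc Ws * herm (hcat Wc Ws) = Wc * herm Wc + Ws * herm Ws"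
proof (rule eq_matI)
  fix i j assume i: "i < dim_row (Wc * herm Wc + Ws * herm Ws)" and j: "j < dim_col (Wc * herm Wc + Ws * herm Ws)"
  hence i: "i < n" and j: "j < n" using Wc Ws by auto
  have "(hcat Wc Ws * herm (hcat Wc Ws)) $$ (i,j) = (\<Sum>c<K+N. hcat Wc Ws $$ (i,c) * cnj (hcat Wc Ws $$ (j,c)))"
    using Wc Ws i j by (subst mult_entry) auto
  also have "\<dots> = (\<Sum>c<K. Wc $$ (i,c) * cnj (Wc $$ (j,c))) + (\<Sum>c<N. Ws $$ (i,c) * cnj (Ws $$ (j,c)))"
    unfolding sum_split_add using Wc Ws i j by (simp add: hcat_index)
  also have "\<dots> = (Wc * herm Wc + Ws * herm Ws) $$ (i,j)"
    using Wc Ws i j by (simp del: index_mult_mat(1) add: mult_entry)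
  finally show "(hcat Wc Ws * herm (hcat Wc Ws)) $$ (i,j) = (Wc * herm Wc + Ws * herm Ws) $$ (i,j)" .
qed (use Wc Ws in auto)

lemma steer_carriers[simp]:
  "steer N M a th ph \<in> carrier_mat N M" "steer_dth N M a th ph \<in> carrier_mat N M" "steer_dph N M a th ph \<in> carrier_mat N M"
  by (simp_all add: steer_def steer_dth_def steer_dph_def)

abbreviation "gW Nt Nr M a b th ph al W \<equiv>
  gv al (steer Nt M a th ph) (steer_dth Nt M a th ph) (steer_dph Nt M a th ph)
        (steer Nr M b th ph) (steer_dth Nr M b th ph) (steer_dph Nr M b th ph) W"

lemma FIM_entry2:
  assumes Wc: "Wc \<in> carrier_mat Nt K" and Ws: "Ws \<in> carrier_mat Nt Ns" and k: "k < 4 * M" and l: "l < 4 * M"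
  shows "FIM Nt Nr M L sigma2 a b th ph al Wc Ws $$ (k,l) = (2 * real L / sigma2) *
     Re (cinner (K+Ns) Nr (gW Nt Nr M a b th ph al (hcat Wc Ws) (k div M) (k mod M))
                          (gW Nt Nr M a b th ph al (hcat Wc Ws) (l div M) (l mod M)))"
  unfolding FIM_def Let_def hcat_R[OF Wc Ws, symmetric]
  by (rule fim_entry[OF steer_carriers steer_carriers hcat_carrier[OF Wc Ws] k l])

lemma FIM_dims[simp]: "dim_row (FIM Nt Nr M L sigma2 a b th ph al Wc Ws) = 4 * M"
   "dim_col (FIM Nt Nr M L sigma2 a b th ph al Wc Ws) = 4 * M"
  unfolding FIM_def Let_def by simp_all

lemma FIM_carrier: "FIM Nt Nr M L sigma2 a b th ph al Wc Ws \<in> carrier_mat (4*M) (4*M)"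
  by (intro carrier_matI) simp_all

lemma cinner_scale:
  assumes "\<And>c r. c < NC \<Longrightarrow> r < Nr \<Longrightarrow> g' c r = complex_of_real k * g c r"
    and "\<And>c r. c < NC \<Longrightarrow> r < Nr \<Longrightarrow> h' c r = complex_of_real k * h c r"
  shows "cinner NC Nr g' h' = complex_of_real (k^2) * cinner NC Nr g h"
  unfolding cinner_def using assms
  by (simp add: sum_distrib_left power2_eq_square algebra_simps)

lemma gv_scale:
  assumes "\<And>m. m < M \<Longrightarrow> phi W' c A m = complex_of_real k * phi W c A m"
    and "\<And>m. m < M \<Longrightarrow> phi W' c At m = complex_of_real k * phi W c At m"
    and "\<And>m. m < M \<Longrightarrow> phi W' c Ap m = complex_of_real k * phi W c Ap m"
    and i: "i < M"
  shows "gv al A At Ap B Bt Bp W' p i c r = complex_of_real k * gv al A At Ap B Bt Bp W p i c r"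
  unfolding gv_def using assms by (simp add: algebra_simps)

lemma FIM_scale:
  assumes Wc: "Wc \<in> carrier_mat Nt K" and Ws: "Ws \<in> carrier_mat Nt Ns"
    and Wc': "Wc' \<in> carrier_mat Nt K" and Ws': "Ws' \<in> carrier_mat Nt Ns"
    and ph_rel: "\<And>c m X. c < K + Ns \<Longrightarrow> m < M \<Longrightarrow>
        X \<in> {steer Nt M a th ph, steer_dth Nt M a th ph, steer_dph Nt M a th ph} \<Longrightarrow>
        phi (hcat Wc' Ws') c X m = complex_of_real k * phi (hcat Wc Ws) c X m"
  shows "FIM Nt Nr M L sigma2 a b th ph al Wc' Ws' = (k^2) \<cdot>\<^sub>m FIM Nt Nr M L sigma2 a b th ph al Wc Ws"
proof (rule eq_matI)
  fix p q assume "p < dim_row ((k^2) \<cdot>\<^sub>m FIM Nt Nr M L sigma2 a b th ph al Wc Ws)"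
    and "q < dim_col ((k^2) \<cdot>\<^sub>m FIM Nt Nr M L sigma2 a b th ph al Wc Ws)"
  hence p: "p < 4 * M" and q: "q < 4 * M" using FIM_carrier by auto
  have M0: "0 < M" using p by auto
  have gs: "gW Nt Nr M a b th ph al (hcat Wc' Ws') s i c r = complex_of_real k * gW Nt Nr M a b th ph al (hcat Wc Ws) s i c r"
    if c: "c < K + Ns" and i: "i < M" for s i c r
    by (rule gv_scale[OF ph_rel ph_rel ph_rel i]) (use c in auto)
  have "cinner (K+Ns) Nr (gW Nt Nr M a b th ph al (hcat Wc' Ws') (p div M) (p mod M))
                          (gW Nt Nr M a b th ph al (hcat Wc' Ws') (q div M) (q mod M))
      = complex_of_real (k^2) * cinner (K+Ns) Nr (gW Nt Nr M a b th ph al (hcat Wc Ws) (p div M) (p mod M))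
                          (gW Nt Nr M a b th ph al (hcat Wc Ws) (q div M) (q mod M))"
    by (rule cinner_scale) (auto intro!: gs simp: M0)
  thus "FIM Nt Nr M L sigma2 a b th ph al Wc' Ws' $$ (p,q) = ((k^2) \<cdot>\<^sub>m FIM Nt Nr M L sigma2 a b th ph al Wc Ws) $$ (p,q)"
    using FIM_entry2[OF Wc Ws p q] FIM_entry2[OF Wc' Ws' p q] FIM_carrier p q by simp
qed (use FIM_carrier in auto)

lemma phi_scale:
  assumes Wc: "Wc \<in> carrier_mat n K" and Ws: "Ws \<in> carrier_mat n N" and c: "c < K + N"
  shows "phi (hcat (complex_of_real k \<cdot>\<^sub>m Wc) (complex_of_real k \<cdot>\<^sub>m Ws)) c X m = complex_of_real k * phi (hcat Wc Ws) c X m"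
  unfolding phi_def using Wc Ws c by (auto simp: hcat_index sum_distrib_left algebra_simps intro!: sum.cong)

lemma phi_mod:
  assumes Wc: "Wc \<in> carrier_mat n K" and Ws: "Ws \<in> carrier_mat n N" and Ws': "Ws' \<in> carrier_mat n N"
    and c: "c < K + N"
    and dec: "\<And>c' b. c' < N \<Longrightarrow> b < n \<Longrightarrow> Ws $$ (b,c') = Ws' $$ (b,c') + V c' b"
    and orth: "\<And>c'. c' < N \<Longrightarrow> (\<Sum>b<n. cnj (V c' b) * X $$ (b,m)) = 0"
  shows "phi (hcat Wc Ws') c X m = phi (hcat Wc Ws) c X m"
proof (cases "c < K")
  case True
  thus ?thesis unfolding phi_def using Wc Ws Ws' c by (auto simp: hcat_index intro!: sum.cong)
next
  case False
  hence c': "c - K < N" using c by auto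
  have "phi (hcat Wc Ws) c X m = (\<Sum>b<n. cnj (Ws' $$ (b, c - K)) * X $$ (b,m) + cnj (V (c - K) b) * X $$ (b,m))"
    unfolding phi_def using Wc Ws c False dec[OF c'] by (auto simp: hcat_index algebra_simps intro!: sum.cong)
  also have "\<dots> = phi (hcat Wc Ws') c X m"
    unfolding sum.distrib orth[OF c'] phi_def using Wc Ws' c False by (auto simp: hcat_index intro!: sum.cong)
  finally show ?thesis by simp
qed

definition pwr :: "complex mat \<Rightarrow> complex mat \<Rightarrow> real" where
  "pwr Wc Ws = Re (mtrace (hcat Wc Ws * herm (hcat Wc Ws)))"

lemma re_mult_cnj: "Re (z * cnj z) = (cmod z)\<^sup>2"
  using cmod_power2[of z] by (simp add: power2_eq_square)

lemma pwr_formula: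
  assumes Wc: "Wc \<in> carrier_mat n K" and Ws: "Ws \<in> carrier_mat n N"
  shows "pwr Wc Ws = (\<Sum>c<K. \<Sum>b<n. (cmod (Wc $$ (b,c)))\<^sup>2) + (\<Sum>c<N. \<Sum>b<n. (cmod (Ws $$ (b,c)))\<^sup>2)"
proof -
  have "pwr Wc Ws = (\<Sum>b<n. Re ((hcat Wc Ws * herm (hcat Wc Ws)) $$ (b,b)))"
    unfolding pwr_def mtrace_def using Wc by (simp add: Re_sum)
  also have "\<dots> = (\<Sum>b<n. \<Sum>c<K+N. (cmod (hcat Wc Ws $$ (b,c)))\<^sup>2)"
  proof (rule sum.cong[OF refl])
    fix b assume b: "b \<in> {..<n}"
    have "(hcat Wc Ws * herm (hcat Wc Ws)) $$ (b,b) = (\<Sum>c<K+N. hcat Wc Ws $$ (b,c) * cnj (hcat Wc Ws $$ (b,c)))"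
      using Wc Ws b by (subst mult_entry) auto
    thus "Re ((hcat Wc Ws * herm (hcat Wc Ws)) $$ (b,b)) = (\<Sum>c<K+N. (cmod (hcat Wc Ws $$ (b,c)))\<^sup>2)"
      by (simp only: Re_sum re_mult_cnj)
  qed
  also have "\<dots> = (\<Sum>c<K+N. \<Sum>b<n. (cmod (hcat Wc Ws $$ (b,c)))\<^sup>2)" by (rule sum.swap)
  also have "\<dots> = (\<Sum>c<K. \<Sum>b<n. (cmod (Wc $$ (b,c)))\<^sup>2) + (\<Sum>c<N. \<Sum>b<n. (cmod (Ws $$ (b,c)))\<^sup>2)"
    unfolding sum_split_add using Wc Ws by (auto simp: hcat_index intro!: arg_cong2[where f="(+)"] sum.cong)
  finally show ?thesis .
qed

lemma pyth:
  assumes "\<And>b. b < n \<Longrightarrow> w b = p b + v b" and "ip n p v = 0"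
  shows "(\<Sum>b<n. (cmod (w b))\<^sup>2) = (\<Sum>b<n. (cmod (p b))\<^sup>2) + (\<Sum>b<n. (cmod (v b))\<^sup>2)"
proof -
  have "(\<Sum>b<n. (cmod (w b))\<^sup>2) = (\<Sum>b<n. (cmod (p b))\<^sup>2 + (cmod (v b))\<^sup>2 + 2 * Re (cnj (p b) * v b))"
    using assms(1) by (intro sum.cong refl) (simp add: cmod_power2 power2_sum algebra_simps)
  also have "\<dots> = (\<Sum>b<n. (cmod (p b))\<^sup>2) + (\<Sum>b<n. (cmod (v b))\<^sup>2) + 2 * Re (ip n p v)"
    by (simp add: sum.distrib ip_def Re_sum sum_distrib_left)
  finally show ?thesis using assms(2) by simp
qed

lemma mtrace_smult: fixes X :: "real mat" shows "X \<in> carrier_mat n n \<Longrightarrow> mtrace (k \<cdot>\<^sub>m X) = k * mtrace X"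
  by (simp add: mtrace_def sum_distrib_left)

lemma smult_inv:
  fixes F :: "real mat"
  assumes F: "F \<in> carrier_mat n n" and inv: "invertible_mat F" and k: "k \<noteq> 0"
  shows "invertible_mat (k \<cdot>\<^sub>m F) \<and> mat_inv (k \<cdot>\<^sub>m F) = (1/k) \<cdot>\<^sub>m mat_inv F"
proof -
  define B where "B = mat_inv F"
  have B: "B \<in> carrier_mat n n" and FB: "F * B = 1\<^sub>m n" and BF: "B * F = 1\<^sub>m n"
    using invertible_inv[OF F inv] B_def by auto
  have kF: "k \<cdot>\<^sub>m F \<in> carrier_mat n n" and kB: "(1/k) \<cdot>\<^sub>m B \<in> carrier_mat n n" using F B by auto
  have "(k \<cdot>\<^sub>m F) * ((1/k) \<cdot>\<^sub>m B) = k \<cdot>\<^sub>m (F * ((1/k) \<cdot>\<^sub>m B))"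
    by (rule mult_smult_assoc_mat[OF F kB])
  also have "\<dots> = k \<cdot>\<^sub>m ((1/k) \<cdot>\<^sub>m (F * B))" by (simp add: mult_smult_distrib[OF F B])
  also have "\<dots> = 1\<^sub>m n" unfolding FB using k by (intro eq_matI) auto
  finally have e1: "(k \<cdot>\<^sub>m F) * ((1/k) \<cdot>\<^sub>m B) = 1\<^sub>m n" .
  have "((1/k) \<cdot>\<^sub>m B) * (k \<cdot>\<^sub>m F) = (1/k) \<cdot>\<^sub>m (B * (k \<cdot>\<^sub>m F))"
    by (rule mult_smult_assoc_mat[OF B kF])
  also have "\<dots> = (1/k) \<cdot>\<^sub>m (k \<cdot>\<^sub>m (B * F))" by (simp add: mult_smult_distrib[OF B F])
  also have "\<dots> = 1\<^sub>m n" unfolding BF using k by (intro eq_matI) auto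
  finally have e2: "((1/k) \<cdot>\<^sub>m B) * (k \<cdot>\<^sub>m F) = 1\<^sub>m n" .
  have "invertible_mat (k \<cdot>\<^sub>m F)"
    unfolding invertible_mat_def inverts_mat_def using kF kB e1 e2 F
    by (intro conjI exI[of _ "(1/k) \<cdot>\<^sub>m B"]) auto
  moreover have "mat_inv (k \<cdot>\<^sub>m F) = (1/k) \<cdot>\<^sub>m B" by (rule mat_inv_eq[OF kF kB e1 e2])
  ultimately show ?thesis by (simp add: B_def)
qed

lemma ip_lin_left0: "ip n (\<lambda>b. \<Sum>i<d. s i * X i b) y = (\<Sum>i<d. cnj (s i) * ip n (X i) y)"
  using ip_lin_left[where u="\<lambda>b. 0" and n=n and d=d and s=s and X=X and y=y] by (simp add: ip_def)

lemma ip_zero_swap: "ip n x y = 0 \<Longrightarrow> (\<Sum>b<n. cnj (y b) * x b) = 0"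
proof -
  assume h: "ip n x y = 0"
  have "(\<Sum>b<n. cnj (y b) * x b) = cnj (ip n x y)" unfolding ip_def by (simp add: mult.commute)
  thus ?thesis using h by simp
qed

lemma pwr_scale:
  assumes Wc: "Wc \<in> carrier_mat n K" and Ws: "Ws \<in> carrier_mat n N"
  shows "pwr (complex_of_real k \<cdot>\<^sub>m Wc) (complex_of_real k \<cdot>\<^sub>m Ws) = k^2 * pwr Wc Ws"
proof -
  have Wc': "complex_of_real k \<cdot>\<^sub>m Wc \<in> carrier_mat n K" and Ws': "complex_of_real k \<cdot>\<^sub>m Ws \<in> carrier_mat n N"
    using Wc Ws by auto
  show ?thesis unfolding pwr_formula[OF Wc Ws] pwr_formula[OF Wc' Ws']
    using Wc Ws by (simp add: norm_mult power_mult_distrib sum_distrib_left distrib_left)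
qed

lemma pwr_nonneg: assumes Wc: "Wc \<in> carrier_mat n K" and Ws: "Ws \<in> carrier_mat n N"
  shows "pwr Wc Ws \<ge> 0"
  unfolding pwr_formula[OF Wc Ws] by (intro add_nonneg_nonneg sum_nonneg) auto

theorem lemma5:
  fixes Nt Nr K M L Ns :: nat
    and sigma2 Pt delta_s :: real
    and a b :: "real \<Rightarrow> real \<Rightarrow> nat \<Rightarrow> complex"
    and th ph :: "nat \<Rightarrow> real" and al :: "nat \<Rightarrow> complex"
    and Wc_opt Ws_opt :: "complex mat"
  assumes "Nt > 0" "Nr > 0" "K > 0" "M > 0" "L > 0"
    and "sigma2 > 0" "Pt > 0" "delta_s > 0"
    and a_diff: "\<And>x i. i < Nt \<Longrightarrow> (\<lambda>p. a (fst p) (snd p) i) differentiable (at x)"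
    and b_diff: "\<And>x i. i < Nr \<Longrightarrow> (\<lambda>p. b (fst p) (snd p) i) differentiable (at x)"
    and opt_feas: "feasible Nt K Ns Pt Wc_opt Ws_opt"
    and opt_inv: "invertible_mat (FIM Nt Nr M L sigma2 a b th ph al Wc_opt Ws_opt)"
    and opt_max: "\<And>Wc Ws. feasible Nt K Ns Pt Wc Ws \<Longrightarrow>
                    invertible_mat (FIM Nt Nr M L sigma2 a b th ph al Wc Ws) \<Longrightarrow>
                    - delta_s * mtrace (mat_inv (FIM Nt Nr M L sigma2 a b th ph al Wc Ws))
                    \<le> - delta_s * mtrace (mat_inv (FIM Nt Nr M L sigma2 a b th ph al Wc_opt Ws_opt))"
  shows "vec_space.rank Nt Ws_opt \<le> 3 * M"
proof -
  have M0: "M > 0" and L0: "L > 0" and s0: "sigma2 > 0" and Pt0: "Pt > 0" and d0: "delta_s > 0"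
    using assms(1-8) by auto
  define A where "A = steer Nt M a th ph"
  define At where "At = steer_dth Nt M a th ph"
  define Ap where "Ap = steer_dph Nt M a th ph"
  have Wc: "Wc_opt \<in> carrier_mat Nt K" and Ws: "Ws_opt \<in> carrier_mat Nt Ns"
    and pw0: "pwr Wc_opt Ws_opt \<le> Pt"
    using opt_feas unfolding feasible_def pwr_def by auto
  define F0 where "F0 = FIM Nt Nr M L sigma2 a b th ph al Wc_opt Ws_opt"
  define sc where "sc = 2 * real L / sigma2"
  have sc0: "sc > 0" using L0 s0 by (simp add: sc_def)
  define g where "g k = gW Nt Nr M a b th ph al (hcat Wc_opt Ws_opt) (k div M) (k mod M)" for k
  have Fe: "F0 $$ (k,l) = sc * Re (cinner (K+Ns) Nr (g k) (g l))" if k: "k < 4*M" and l: "l < 4*M" for k l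
    unfolding F0_def sc_def g_def by (rule FIM_entry2[OF Wc Ws k l])
  have n0: "4 * M > 0" using M0 by simp
  have F0c: "F0 \<in> carrier_mat (4*M) (4*M)" unfolding F0_def by (rule FIM_carrier)
  have inv0: "invertible_mat F0" unfolding F0_def by (rule opt_inv)
  have t0: "mtrace (mat_inv F0) > 0"
    by (rule gram_trace_pos[OF F0c n0 sc0 Fe inv0])
  define Xv where "Xv i b = (if i < M then A $$ (b,i) else if i < 2*M then At $$ (b, i - M) else Ap $$ (b, i - 2*M))" for i b
  have "\<forall>c. \<exists>t v. (\<forall>b<Nt. Ws_opt $$ (b,c) = (\<Sum>i<3*M. t i * Xv i b) + v b) \<and> (\<forall>i<3*M. ip Nt (Xv i) v = 0)"
    by (rule allI, rule proj_exists)
  then obtain T where "\<forall>c. \<exists>v. (\<forall>b<Nt. Ws_opt $$ (b,c) = (\<Sum>i<3*M. T c i * Xv i b) + v b) \<and> (\<forall>i<3*M. ip Nt (Xv i) v = 0)"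
    by (metis choice)
  then obtain V where TV: "\<And>c. (\<forall>b<Nt. Ws_opt $$ (b,c) = (\<Sum>i<3*M. T c i * Xv i b) + V c b) \<and> (\<forall>i<3*M. ip Nt (Xv i) (V c) = 0)"
    by (metis choice)
  define Ws' where "Ws' = mat Nt Ns (\<lambda>(b,c). \<Sum>i<3*M. T c i * Xv i b)"
  have Ws': "Ws' \<in> carrier_mat Nt Ns" by (simp add: Ws'_def)
  have dec: "\<And>c b. c < Ns \<Longrightarrow> b < Nt \<Longrightarrow> Ws_opt $$ (b,c) = Ws' $$ (b,c) + V c b"
    using TV by (simp add: Ws'_def)
  show ?thesis
  proof (cases "\<forall>c<Ns. \<forall>b<Nt. V c b = 0")
    case True
    show ?thesis
      by (rule rank_outer_sum[OF Ws, where d="3*M" and f="\<lambda>i b. Xv i b" and g="\<lambda>i c. T c i"])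
         (use dec True in \<open>auto simp: Ws'_def mult.commute\<close>)
  next
    case False
    then obtain c0 b0 where c0: "c0 < Ns" and b0: "b0 < Nt" and nz: "V c0 b0 \<noteq> 0" by auto
    have orth: "(\<Sum>b<Nt. cnj (V c' b) * X $$ (b,m)) = 0"
      if c': "c' < Ns" and m: "m < M" and X: "X \<in> {A, At, Ap}" for c' m X
    proof -
      obtain i where i: "i < 3*M" and Xi: "\<And>b. Xv i b = X $$ (b,m)"
      proof -
        consider "X = A" | "X = At" | "X = Ap" using X by auto
        thus ?thesis
        proof cases
          case 1 thus ?thesis using that[of m] m by (simp add: Xv_def)
        next
          case 2 thus ?thesis using that[of "M + m"] m by (simp add: Xv_def)
        next
          case 3 thus ?thesis using that[of "2*M + m"] m by (simp add: Xv_def)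
        qed
      qed
      have "ip Nt (Xv i) (V c') = 0" using TV i by blast
      from ip_zero_swap[OF this] show ?thesis using Xi by simp
    qed
    have phi_eq: "phi (hcat Wc_opt Ws') c X m = phi (hcat Wc_opt Ws_opt) c X m"
      if c: "c < K + Ns" and m: "m < M" and X: "X \<in> {A, At, Ap}" for c m X
      by (rule phi_mod[OF Wc Ws Ws' c dec]) (use orth m X in auto)
    have col: "(\<Sum>b<Nt. (cmod (Ws_opt $$ (b,c)))\<^sup>2) = (\<Sum>b<Nt. (cmod (Ws' $$ (b,c)))\<^sup>2) + (\<Sum>b<Nt. (cmod (V c b))\<^sup>2)"
      if c: "c < Ns" for c
    proof (rule pyth)
      show "\<And>b. b < Nt \<Longrightarrow> Ws_opt $$ (b,c) = Ws' $$ (b,c) + V c b" using dec c by blast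
      have "ip Nt (\<lambda>b. Ws' $$ (b,c)) (V c) = ip Nt (\<lambda>b. \<Sum>i<3*M. T c i * Xv i b) (V c)"
        unfolding ip_def using c by (intro sum.cong refl) (simp add: Ws'_def)
      also have "\<dots> = (\<Sum>i<3*M. cnj (T c i) * ip Nt (Xv i) (V c))" by (rule ip_lin_left0)
      also have "\<dots> = 0" using TV by simp
      finally show "ip Nt (\<lambda>b. Ws' $$ (b,c)) (V c) = 0" .
    qed
    have pos: "(\<Sum>c<Ns. \<Sum>b<Nt. (cmod (V c b))\<^sup>2) > 0"
    proof (rule sum_pos2[of _ c0])
      show "0 < (\<Sum>b<Nt. (cmod (V c0 b))\<^sup>2)"
        by (rule sum_pos2[of _ b0]) (use b0 nz in auto)
    qed (use c0 in \<open>auto intro: sum_nonneg\<close>)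
    have "pwr Wc_opt Ws_opt = pwr Wc_opt Ws' + (\<Sum>c<Ns. \<Sum>b<Nt. (cmod (V c b))\<^sup>2)"
      unfolding pwr_formula[OF Wc Ws] pwr_formula[OF Wc Ws'] using col
      by (simp add: sum.distrib)
    hence Plt: "pwr Wc_opt Ws' < Pt" using pos pw0 by linarith
    define P' where "P' = pwr Wc_opt Ws'"
    have P'0: "P' \<ge> 0" unfolding P'_def by (rule pwr_nonneg[OF Wc Ws'])
    define lam where "lam = (if P' = 0 then 2 else Pt / P')"
    have lam1: "lam > 1" using Plt P'0 Pt0 by (auto simp: lam_def P'_def)
    have lamP: "lam * P' \<le> Pt" using P'0 Pt0 by (auto simp: lam_def)
    define kap where "kap = sqrt lam"
    have kap2: "kap^2 = lam" using lam1 by (simp add: kap_def)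
    define W2c where "W2c = complex_of_real kap \<cdot>\<^sub>m Wc_opt"
    define W2s where "W2s = complex_of_real kap \<cdot>\<^sub>m Ws'"
    have W2c: "W2c \<in> carrier_mat Nt K" and W2s: "W2s \<in> carrier_mat Nt Ns" using Wc Ws' by (auto simp: W2c_def W2s_def)
    have feas2: "feasible Nt K Ns Pt W2c W2s"
    proof -
      have "pwr W2c W2s = lam * P'" unfolding W2c_def W2s_def P'_def pwr_scale[OF Wc Ws'] kap2 ..
      thus ?thesis using W2c W2s lamP unfolding feasible_def pwr_def by auto
    qed
    have FIM2: "FIM Nt Nr M L sigma2 a b th ph al W2c W2s = (kap^2) \<cdot>\<^sub>m F0"
      unfolding F0_def
    proof (rule FIM_scale[OF Wc Ws W2c W2s])
      fix c m X assume c: "c < K + Ns" and m: "m < M"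
        and X: "X \<in> {steer Nt M a th ph, steer_dth Nt M a th ph, steer_dph Nt M a th ph}"
      have "phi (hcat W2c W2s) c X m = complex_of_real kap * phi (hcat Wc_opt Ws') c X m"
        unfolding W2c_def W2s_def by (rule phi_scale[OF Wc Ws' c])
      also have "\<dots> = complex_of_real kap * phi (hcat Wc_opt Ws_opt) c X m"
        using phi_eq[OF c m] X by (auto simp: A_def At_def Ap_def)
      finally show "phi (hcat W2c W2s) c X m = complex_of_real kap * phi (hcat Wc_opt Ws_opt) c X m" .
    qed
    have lam0: "lam \<noteq> 0" using lam1 by simp
    have si: "invertible_mat (lam \<cdot>\<^sub>m F0) \<and> mat_inv (lam \<cdot>\<^sub>m F0) = (1/lam) \<cdot>\<^sub>m mat_inv F0"
      by (rule smult_inv[OF F0c _ lam0]) (use opt_inv in \<open>simp add: F0_def\<close>)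
    have inv2: "invertible_mat (FIM Nt Nr M L sigma2 a b th ph al W2c W2s)"
      using si FIM2 kap2 by simp
    have invc: "mat_inv F0 \<in> carrier_mat (4*M) (4*M)"
      using invertible_inv[OF F0c] opt_inv by (simp add: F0_def)
    have tr2: "mtrace (mat_inv (FIM Nt Nr M L sigma2 a b th ph al W2c W2s)) = (1/lam) * mtrace (mat_inv F0)"
      using si FIM2 kap2 mtrace_smult[OF invc] by simp
    have "- delta_s * ((1/lam) * mtrace (mat_inv F0)) \<le> - delta_s * mtrace (mat_inv F0)"
      using opt_max[OF feas2 inv2] tr2 by (simp add: F0_def)
    hence "delta_s * mtrace (mat_inv F0) \<le> delta_s * mtrace (mat_inv F0) / lam" by simp
    moreover have "delta_s * mtrace (mat_inv F0) / lam < delta_s * mtrace (mat_inv F0)"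
      using lam1 d0 t0 by (simp add: divide_less_eq)
    ultimately show ?thesis by simp
  qed
qed

end
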